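(* Let $m,K$ be positive integers and $b_1,\dots,b_{3m}$ positive integers with $K/4<b_i<K/2$ and $\sum_i b_i=mK$. Set $W=100(5m)^2K$, $a_i=b_i+W$, $L=3W+K$, $\epsilon=1/(400(5m)^2)$, $h=\lfloor 4\epsilon L\rfloor$, $H=L+h$. Let $X$ be the multiset consisting of $a_1,\dots,a_{3m}$, $m$ copies of $-H$ and $m$ copies of $h$, and let $T_{\min}$ be a minimum-cost addition tree over $X$. For every node $z$ of $T_{\min}$ (identified with its value): (1) if $z<0$ then $|z|\le H$; (2) if $z>0$ then $z<H$.
   Context: An addition tree over a multiset $X$ is a full binary tree whose leaves are labeled by the elements of $X$ (each used once), each internal node having value equal to the sum of its children's values; its cost is the sum of the absolute values of the values of its internal nodes, and $T_{\min}$ is an addition tree over $X$ of minimum cost. *)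

theory Defs
  imports Complex_Main "HOL-Library.Multiset"
begin

datatype atree = Leaf int | Node atree atree

fun aval :: "atree \<Rightarrow> int" where
  "aval (Leaf x) = x"
| "aval (Node l r) = aval l + aval r"

fun leaves :: "atree \<Rightarrow> int multiset" where
  "leaves (Leaf x) = {#x#}"
| "leaves (Node l r) = leaves l + leaves r"

fun cost :: "atree \<Rightarrow> int" where
  "cost (Leaf x) = 0"
| "cost (Node l r) = \<bar>aval l + aval r\<bar> + cost l + cost r"

fun node_vals :: "atree \<Rightarrow> int set" where
  "node_vals (Leaf x) = {x}"
| "node_vals (Node l r) = insert (aval l + aval r) (node_vals l \<union> node_vals r)"

definition addition_tree_over :: "atree \<Rightarrow> int multiset \<Rightarrow> bool" where
  "addition_tree_over T X \<longleftrightarrow> leaves T = X"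

definition min_cost_tree :: "atree \<Rightarrow> int multiset \<Rightarrow> bool" where
  "min_cost_tree T X \<longleftrightarrow> addition_tree_over T X \<and>
     (\<forall>T'. addition_tree_over T' X \<longrightarrow> cost T \<le> cost T')"

end

theory Submission
  imports Defs
begin

fun subtrees :: "atree \<Rightarrow> atree set" where
  "subtrees (Leaf x) = {Leaf x}"
| "subtrees (Node l r) = insert (Node l r) (subtrees l \<union> subtrees r)"

lemma aval_sum: "aval t = sum_mset (leaves t)" by (induction t) auto

lemma subtrees_refl: "t \<in> subtrees t" by (cases t) auto

lemma subtrees_trans: "u \<in> subtrees t \<Longrightarrow> v \<in> subtrees u \<Longrightarrow> v \<in> subtrees t"
  by (induction t) auto

lemma node_vals_sub: "node_vals t = aval ` subtrees t" by (induction t) auto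

lemma aval_in: "aval t \<in> node_vals t" by (cases t) auto

lemma leaves_ne: "leaves t \<noteq> {#}" by (induction t) auto

lemma finite_nv: "finite (node_vals t)" by (induction t) auto

lemma parent_ex: "u \<in> subtrees t \<Longrightarrow> u \<noteq> t \<Longrightarrow> \<exists>s. Node u s \<in> subtrees t \<or> Node s u \<in> subtrees t"
proof (induction t)
  case (Leaf x) then show ?case by auto
next
  case (Node l r)
  show ?case
  proof (cases "u \<in> subtrees l")
    case True
    then show ?thesis
    proof (cases "u = l")
      case True then show ?thesis by auto
    next
      case False then show ?thesis using Node.IH(1) \<open>u \<in> subtrees l\<close> by auto
    qed
  next
    case False
    then have "u \<in> subtrees r" using Node.prems by auto
    then show ?thesis
    proof (cases "u = r")
      case True then show ?thesis by auto
    next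
      case False then show ?thesis using Node.IH(2) \<open>u \<in> subtrees r\<close> by auto
    qed
  qed
qed

definition opt :: "atree \<Rightarrow> bool" where
  "opt t \<longleftrightarrow> (\<forall>t'. leaves t' = leaves t \<longrightarrow> cost t \<le> cost t')"

lemma opt_le: "opt t \<Longrightarrow> leaves t' = leaves t \<Longrightarrow> cost t \<le> cost t'"
  unfolding opt_def by blast

lemma opt_sub: "opt t \<Longrightarrow> u \<in> subtrees t \<Longrightarrow> opt u"
proof (induction t)
  case (Leaf x) then show ?case by auto
next
  case (Node l r)
  have ol: "opt l" unfolding opt_def
  proof (intro allI impI)
    fix l' assume a: "leaves l' = leaves l"
    have "cost (Node l r) \<le> cost (Node l' r)" by (rule opt_le[OF Node.prems(1)]) (simp add: a)
    moreover have "aval l' = aval l" using a aval_sum by metis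
    ultimately show "cost l \<le> cost l'" by simp
  qed
  have or: "opt r" unfolding opt_def
  proof (intro allI impI)
    fix r' assume a: "leaves r' = leaves r"
    have "cost (Node l r) \<le> cost (Node l r')" by (rule opt_le[OF Node.prems(1)]) (simp add: a)
    moreover have "aval r' = aval r" using a aval_sum by metis
    ultimately show "cost r \<le> cost r'" by simp
  qed
  show ?case using Node ol or by auto
qed

lemma rot1: "opt (Node (Node x y) s) \<Longrightarrow>
  \<bar>aval x + aval y\<bar> \<le> \<bar>aval y + aval s\<bar> \<and> \<bar>aval x + aval y\<bar> \<le> \<bar>aval x + aval s\<bar>"
proof -
  assume o: "opt (Node (Node x y) s)"
  have "cost (Node (Node x y) s) \<le> cost (Node x (Node y s))"
    by (rule opt_le[OF o]) (simp add: add_ac)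
  moreover have "cost (Node (Node x y) s) \<le> cost (Node y (Node x s))"
    by (rule opt_le[OF o]) (simp add: add_ac)
  ultimately show ?thesis by (simp add: add_ac)
qed

lemma rot2: "opt (Node s (Node x y)) \<Longrightarrow>
  \<bar>aval x + aval y\<bar> \<le> \<bar>aval s + aval y\<bar> \<and> \<bar>aval x + aval y\<bar> \<le> \<bar>aval s + aval x\<bar>"
proof -
  assume o: "opt (Node s (Node x y))"
  have "cost (Node s (Node x y)) \<le> cost (Node (Node s x) y)"
    by (rule opt_le[OF o]) (simp add: add_ac)
  moreover have "cost (Node s (Node x y)) \<le> cost (Node (Node s y) x)"
    by (rule opt_le[OF o]) (simp add: add_ac)
  ultimately show ?thesis by (simp add: add_ac)
qed

lemma findpos: "v \<in> node_vals t \<Longrightarrow> v > 0 \<Longrightarrow> \<forall>z\<in>node_vals t. \<bar>z\<bar> \<le> v \<Longrightarrow> v \<notin># leaves t \<Longrightarrow>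
  \<exists>x y. Node x y \<in> subtrees t \<and> aval x + aval y = v \<and> aval x > 0 \<and> aval y > 0"
proof (induction t)
  case (Leaf x) then show ?case by auto
next
  case (Node l r)
  show ?case
  proof (cases "v \<in> node_vals l")
    case True then show ?thesis using Node by fastforce
  next
    case f1: False
    show ?thesis
    proof (cases "v \<in> node_vals r")
      case True then show ?thesis using Node by fastforce
    next
      case False
      then have v: "v = aval l + aval r" using f1 Node.prems by auto
      have "\<bar>aval l\<bar> \<le> v" "\<bar>aval r\<bar> \<le> v" using Node.prems(3) aval_in by auto
      then have "aval l > 0" "aval r > 0" using f1 False aval_in[of l] aval_in[of r] v
        by (smt (verit))+
      then show ?thesis using v by auto
    qed
  qed
qed

lemma findneg: "v \<in> node_vals t \<Longrightarrow> v < 0 \<Longrightarrow> \<forall>z\<in>node_vals t. \<bar>z\<bar> \<le> -v \<Longrightarrow> v \<notin># leaves t \<Longrightarrow>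
  \<exists>x y. Node x y \<in> subtrees t \<and> aval x + aval y = v \<and> aval x < 0 \<and> aval y < 0"
proof (induction t)
  case (Leaf x) then show ?case by auto
next
  case (Node l r)
  show ?case
  proof (cases "v \<in> node_vals l")
    case True then show ?thesis using Node by fastforce
  next
    case f1: False
    show ?thesis
    proof (cases "v \<in> node_vals r")
      case True then show ?thesis using Node by fastforce
    next
      case False
      then have v: "v = aval l + aval r" using f1 Node.prems by auto
      have "\<bar>aval l\<bar> \<le> -v" "\<bar>aval r\<bar> \<le> -v" using Node.prems(3) aval_in by auto
      then have "aval l < 0" "aval r < 0" using f1 False aval_in[of l] aval_in[of r] v
        by (smt (verit))+
      then show ?thesis using v by auto
    qed
  qed
qed

lemma coreC:
  assumes o: "opt T" and a0: "aval T = 0" and v0: "v \<noteq> 0" and vin: "v \<in> node_vals T"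
    and mx: "\<forall>z\<in>node_vals T. \<bar>z\<bar> \<le> \<bar>v\<bar>" and nl: "v \<notin># leaves T"
  shows False
proof -
  have "\<exists>x y. Node x y \<in> subtrees T \<and> aval x + aval y = v \<and>
     ((aval x > 0 \<and> aval y > 0) \<or> (aval x < 0 \<and> aval y < 0))"
  proof (cases "v > 0")
    case True
    have "\<forall>z\<in>node_vals T. \<bar>z\<bar> \<le> v" using mx True by auto
    from findpos[OF vin True this nl] show ?thesis by blast
  next
    case False
    then have vn: "v < 0" using v0 by auto
    have "\<forall>z\<in>node_vals T. \<bar>z\<bar> \<le> -v" using mx vn by auto
    from findneg[OF vin vn this nl] show ?thesis by blast
  qed
  then obtain x y where xy: "Node x y \<in> subtrees T" "aval x + aval y = v"
    and sg: "(aval x > 0 \<and> aval y > 0) \<or> (aval x < 0 \<and> aval y < 0)" by blast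
  have "Node x y \<noteq> T" using xy a0 v0 by auto
  then obtain s where hs: "Node (Node x y) s \<in> subtrees T \<or> Node s (Node x y) \<in> subtrees T"
    using parent_ex xy(1) by blast
  have "\<exists>p. p \<in> subtrees T \<and> s \<in> subtrees T \<and> \<bar>v\<bar> \<le> \<bar>aval y + aval s\<bar> \<and>
     \<bar>v\<bar> \<le> \<bar>aval x + aval s\<bar> \<and> aval p = v + aval s"
  proof (rule disjE[OF hs])
    assume h: "Node (Node x y) s \<in> subtrees T"
    have r: "\<bar>aval x + aval y\<bar> \<le> \<bar>aval y + aval s\<bar> \<and> \<bar>aval x + aval y\<bar> \<le> \<bar>aval x + aval s\<bar>"
      using rot1[OF opt_sub[OF o h]] .
    have "s \<in> subtrees T" using subtrees_trans[OF h, of s] subtrees_refl[of s] by simp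
    then show ?thesis using r h xy(2) by (intro exI[of _ "Node (Node x y) s"]) simp
  next
    assume h: "Node s (Node x y) \<in> subtrees T"
    have r: "\<bar>aval x + aval y\<bar> \<le> \<bar>aval s + aval y\<bar> \<and> \<bar>aval x + aval y\<bar> \<le> \<bar>aval s + aval x\<bar>"
      using rot2[OF opt_sub[OF o h]] .
    have "s \<in> subtrees T" using subtrees_trans[OF h, of s] subtrees_refl[of s] by simp
    then show ?thesis using r h xy(2) by (intro exI[of _ "Node s (Node x y)"]) (simp add: add_ac)
  qed
  then obtain p where p: "p \<in> subtrees T" and ss: "s \<in> subtrees T" and
    ineq: "\<bar>v\<bar> \<le> \<bar>aval y + aval s\<bar>" "\<bar>v\<bar> \<le> \<bar>aval x + aval s\<bar>" and pv: "aval p = v + aval s"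
    by blast
  have "aval p \<in> node_vals T" "aval s \<in> node_vals T" using p ss node_vals_sub by auto
  then have "\<bar>aval p\<bar> \<le> \<bar>v\<bar>" "\<bar>aval s\<bar> \<le> \<bar>v\<bar>" using mx by auto
  then show False using ineq pv sg xy(2) by linarith
qed

lemma general:
  assumes o: "opt T" and a0: "aval T = 0" and lv: "\<forall>l\<in>#leaves T. -B \<le> l \<and> l < B"
  shows "\<forall>z\<in>node_vals T. -B \<le> z \<and> z < B"
proof (rule ccontr)
  assume "\<not> ?thesis"
  then obtain z where z: "z \<in> node_vals T" "\<not> (-B \<le> z \<and> z < B)" by blast
  obtain l0 where "l0 \<in># leaves T" using leaves_ne[of T] by blast
  then have Bp: "B > 0" using lv by force
  define M where "M = Max (abs ` node_vals T)"
  have fin: "finite (abs ` node_vals T)" using finite_nv by blast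
  have mx: "\<forall>w\<in>node_vals T. \<bar>w\<bar> \<le> M" using fin M_def by simp
  have zM: "\<bar>z\<bar> \<le> M" using mx z(1) by blast
  have "M \<in> abs ` node_vals T" unfolding M_def using fin z(1) by (intro Max_in) auto
  then obtain v where v: "v \<in> node_vals T" "\<bar>v\<bar> = M" by blast
  have mxv: "\<forall>w\<in>node_vals T. \<bar>w\<bar> \<le> \<bar>v\<bar>" using mx v(2) by simp
  show False
  proof (cases "z \<ge> B")
    case True
    show False
    proof (cases "z = M")
      case True
      have "z \<notin># leaves T" using lv \<open>z \<ge> B\<close> by force
      moreover have "\<forall>w\<in>node_vals T. \<bar>w\<bar> \<le> \<bar>z\<bar>" using mx True zM by force
      moreover have "z \<noteq> 0" using Bp \<open>z \<ge> B\<close> by linarith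
      ultimately show False using coreC[OF o a0 _ z(1)] by blast
    next
      case False
      then have "z < M" using zM by linarith
      then have "v \<noteq> 0" "v < -B \<or> v \<ge> B" using v(2) \<open>z \<ge> B\<close> Bp by (auto simp: abs_if split: if_splits)
      then have "v \<notin># leaves T" using lv by force
      then show False using coreC[OF o a0 \<open>v \<noteq> 0\<close> v(1) mxv] by blast
    qed
  next
    case False
    then have "z < -B" using z(2) by linarith
    then have "v \<noteq> 0" "v < -B \<or> v > B" using v(2) zM Bp by (auto simp: abs_if split: if_splits)
    then have "v \<notin># leaves T" using lv by force
    then show False using coreC[OF o a0 \<open>v \<noteq> 0\<close> v(1) mxv] by blast
  qed
qed

theorem lemma2p6:
  fixes m K :: nat and b :: "nat \<Rightarrow> int"
    and W L H h :: int and \<epsilon> :: real and X :: "int multiset" and T :: atree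
  assumes "m > 0" and "K > 0"
    and "\<forall>i\<in>{1..3*m}. b i > 0 \<and> real K / 4 < real_of_int (b i) \<and> real_of_int (b i) < real K / 2"
    and "(\<Sum>i=1..3*m. b i) = int m * int K"
    and "W = 100 * (5 * int m)^2 * int K"
    and "L = 3 * W + int K"
    and "\<epsilon> = 1 / (400 * (5 * real m)^2)"
    and "h = \<lfloor>4 * \<epsilon> * real_of_int L\<rfloor>"
    and "H = L + h"
    and "X = mset (map (\<lambda>i. b i + W) [1..<3*m+1]) + replicate_mset m (- H) + replicate_mset m h"
    and "min_cost_tree T X"
  shows "\<forall>z\<in>node_vals T. (z < 0 \<longrightarrow> \<bar>z\<bar> \<le> H) \<and> (z > 0 \<longrightarrow> z < H)"
proof -
  have lT: "leaves T = X" using assms(11) unfolding min_cost_tree_def addition_tree_over_def by auto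
  have o: "opt T" using assms(11) unfolding min_cost_tree_def addition_tree_over_def opt_def by auto
  have W0: "W \<ge> 0" using assms(5) by auto
  have L0: "L > 0" using assms(6) assms(2) W0 by auto
  have e0: "\<epsilon> > 0" using assms(7) assms(1) by simp
  have h0: "h \<ge> 0" using assms(8) e0 L0 by simp
  have bK: "\<forall>i\<in>{1..3*m}. 0 < b i \<and> b i < int K"
  proof
    fix i assume "i \<in> {1..3*m}"
    then have "b i > 0" "real_of_int (b i) < real K / 2" using assms(3) by auto
    then show "0 < b i \<and> b i < int K" using assms(2) by linarith
  qed
  have sX: "sum_mset X = 0"
  proof -
    have st: "set [1..<3*m+1] = {1..3*m}" by auto
    have "sum_list (map (\<lambda>i. b i + W) [1..<3*m+1]) = (\<Sum>i=1..3*m. b i + W)"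
      by (subst sum_list_distinct_conv_sum_set) (simp_all only: st distinct_upt)
    also have "\<dots> = int m * int K + 3 * int m * W" using assms(4) by (simp add: sum.distrib)
    finally have "sum_list (map (\<lambda>i. b i + W) [1..<3*m+1]) = int m * int K + 3 * int m * W" .
    moreover have "sum_mset X = sum_list (map (\<lambda>i. b i + W) [1..<3*m+1]) + int m * (-H) + int m * h"
      by (simp only: assms(10) sum_mset.union sum_mset_sum_list sum_mset_replicate_mset)
    ultimately show ?thesis using assms(9) assms(6) by (simp add: algebra_simps)
  qed
  have lv: "\<forall>l\<in>#leaves T. -H \<le> l \<and> l < H"
  proof
    fix l assume "l \<in># leaves T"
    then have "l \<in> (\<lambda>i. b i + W) ` {1..<3*m+1} \<or> (m > 0 \<and> l = -H) \<or> (m > 0 \<and> l = h)"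
      using lT assms(10) by (auto split: if_splits)
    then show "-H \<le> l \<and> l < H"
    proof (elim disjE)
      assume "l \<in> (\<lambda>i. b i + W) ` {1..<3*m+1}"
      then obtain i where "i \<in> {1..<3*m+1}" "l = b i + W" by blast
      then have "i \<in> {1..3*m}" "l = b i + W" by auto
      then show ?thesis using bK assms(9) assms(6) W0 h0 by force
    qed (use L0 h0 assms(9) in auto)
  qed
  have "aval T = 0" using aval_sum lT sX by simp
  from general[OF o this lv] show ?thesis by force
qed

end
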